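(* Let $G=G_{1}\times\cdots\times G_{d}$ be a direct product where each $G_j$ is $k_j$-regular with $k_j\geq 1$. If, for each $j$, the adjacency eigenvalues of $G_j$ are integers all having the same 2-adic valuation $\nu_2$, then for every vertex $u$ of $G$, $\uparrow^{2}G$ has Laplacian perfect state transfer between $(0,u)$ and $(1,u)$.
   Context: All graphs are simple, undirected and unweighted. The direct product $G\times H$ is the graph with adjacency matrix $A(G)\otimes A(H)$. For a nonzero integer $n$, $\nu_2(n)$ is the exponent of the largest power of $2$ dividing $n$, and $\nu_2(0)=\infty$. The blow-up $\uparrow^{2}G$ has vertex set $\mathbb{Z}_2\times V(G)$, with $(l,u)\sim(m,v)$ iff $u\sim v$ in $G$. For a graph $X$ with Laplacian $L=D-A$, $U(t)=\exp(itL)$, and $X$ has Laplacian perfect state transfer between vertices $a,b$ if $U(\tau)\mathbf{e}_a=\gamma\mathbf{e}_b$ for some $\tau>0$ and $\gamma\in\mathbb{C}$. *)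

theory Defs
  imports Complex_Main "HOL-Computational_Algebra.Primes" "HOL-Library.Extended_Nat"
begin

type_synonym 'a graph = "'a set \<times> ('a \<Rightarrow> 'a \<Rightarrow> bool)"

definition simple_graph :: "'a graph \<Rightarrow> bool" where
  "simple_graph G \<longleftrightarrow> finite (fst G) \<and>
     (\<forall>u v. snd G u v \<longrightarrow> u \<in> fst G \<and> v \<in> fst G) \<and>
     (\<forall>u v. snd G u v \<longrightarrow> snd G v u) \<and> (\<forall>u. \<not> snd G u u)"

definition degree :: "'a graph \<Rightarrow> 'a \<Rightarrow> nat" where
  "degree G u = card {v \<in> fst G. snd G u v}"

definition regular :: "'a graph \<Rightarrow> nat \<Rightarrow> bool" where
  "regular G k \<longleftrightarrow> (\<forall>u \<in> fst G. degree G u = k)"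

definition adj :: "'a graph \<Rightarrow> 'a \<Rightarrow> 'a \<Rightarrow> real" where
  "adj G u v = (if snd G u v then 1 else 0)"

definition adj_eigenvalue :: "'a graph \<Rightarrow> real \<Rightarrow> bool" where
  "adj_eigenvalue G lam \<longleftrightarrow> (\<exists>f :: 'a \<Rightarrow> real. (\<exists>v \<in> fst G. f v \<noteq> 0) \<and>
      (\<forall>u \<in> fst G. (\<Sum>v \<in> fst G. adj G u v * f v) = lam * f u))"

definition nu2 :: "int \<Rightarrow> enat" where
  "nu2 n = (if n = 0 then \<infinity> else enat (multiplicity (2::int) n))"

text \<open>Direct product of a list of graphs G_1 x ... x G_d (adjacency matrix = Kronecker product).\<close>
definition dprod :: "'a graph list \<Rightarrow> 'a list graph" where
  "dprod Gs = ({xs. length xs = length Gs \<and> (\<forall>j < length Gs. xs ! j \<in> fst (Gs ! j))},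
     (\<lambda>xs ys. length xs = length Gs \<and> length ys = length Gs \<and>
        (\<forall>j < length Gs. snd (Gs ! j) (xs ! j) (ys ! j))))"

definition blowup2 :: "'a graph \<Rightarrow> (nat \<times> 'a) graph" where
  "blowup2 G = ({0,1} \<times> fst G,
     (\<lambda>(l,u) (m,v). l \<in> {0,1} \<and> m \<in> {0,1} \<and> snd G u v))"

definition laplacian :: "'a graph \<Rightarrow> 'a \<Rightarrow> 'a \<Rightarrow> complex" where
  "laplacian G u v = (if u = v then of_nat (degree G u) else 0) - (if snd G u v then 1 else 0)"

fun mat_pow :: "'a set \<Rightarrow> ('a \<Rightarrow> 'a \<Rightarrow> complex) \<Rightarrow> nat \<Rightarrow> 'a \<Rightarrow> 'a \<Rightarrow> complex" where
  "mat_pow V M 0 u v = (if u = v then 1 else 0)"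
| "mat_pow V M (Suc n) u v = (\<Sum>w \<in> V. M u w * mat_pow V M n w v)"

definition lap_U :: "'a graph \<Rightarrow> real \<Rightarrow> 'a \<Rightarrow> 'a \<Rightarrow> complex" where
  "lap_U G t u v = (\<Sum>n. (\<i> * of_real t) ^ n / of_nat (fact n) * mat_pow (fst G) (laplacian G) n u v)"

definition lap_pst :: "'a graph \<Rightarrow> 'a \<Rightarrow> 'a \<Rightarrow> bool" where
  "lap_pst G a b \<longleftrightarrow> a \<in> fst G \<and> b \<in> fst G \<and>
     (\<exists>\<tau> > 0. \<exists>\<gamma> :: complex. \<forall>v \<in> fst G. lap_U G \<tau> v a = \<gamma> * (if v = b then 1 else 0))"

end

theory Submission
  imports Defs "HOL-Computational_Algebra.Fundamental_Theorem_Algebra" "HOL-Library.Function_Algebras"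
begin


definition Mop :: "'v set \<Rightarrow> ('v \<Rightarrow> 'v \<Rightarrow> real) \<Rightarrow> ('v \<Rightarrow> complex) \<Rightarrow> 'v \<Rightarrow> complex" where
  "Mop V m g = (\<lambda>x. \<Sum>y\<in>V. complex_of_real (m x y) * g y)"

definition peval :: "'v set \<Rightarrow> ('v \<Rightarrow> 'v \<Rightarrow> real) \<Rightarrow> complex poly \<Rightarrow> ('v \<Rightarrow> complex) \<Rightarrow> 'v \<Rightarrow> complex" where
  "peval V m p f = foldr (\<lambda>a g x. a * f x + Mop V m g x) (coeffs p) (\<lambda>x. 0)"

lemma Mop_zero[simp]: "Mop V m (\<lambda>x. 0) = (\<lambda>x. 0)" by (simp add: Mop_def)
lemma Mop_add: "Mop V m (\<lambda>x. f x + g x) = (\<lambda>x. Mop V m f x + Mop V m g x)"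
  by (simp add: Mop_def algebra_simps sum.distrib)
lemma Mop_diff: "Mop V m (\<lambda>x. f x - g x) = (\<lambda>x. Mop V m f x - Mop V m g x)"
  by (simp add: Mop_def algebra_simps sum_subtractf)
lemma Mop_scale: "Mop V m (\<lambda>x. c * f x) = (\<lambda>x. c * Mop V m f x)"
  by (simp add: Mop_def sum_distrib_left algebra_simps)
lemma Mop_cong: "(\<forall>y\<in>V. f y = g y) \<Longrightarrow> Mop V m f = Mop V m g"
  by (simp add: Mop_def)

lemma peval_0[simp]: "peval V m 0 f = (\<lambda>x. 0)" by (simp add: peval_def)

lemma peval_pCons: "peval V m (pCons a p) f = (\<lambda>x. a * f x + Mop V m (peval V m p f) x)"
  by (cases "a = 0 \<and> p = 0") (auto simp add: peval_def cCons_def)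

lemma peval_add: "peval V m (p + q) f = (\<lambda>x. peval V m p f x + peval V m q f x)"
proof (induction p q rule: poly_induct2)
  case 0 then show ?case by simp
next
  case (pCons a p b q)
  then show ?case by (simp add: peval_pCons Mop_add algebra_simps)
qed

lemma peval_smult: "peval V m (smult c p) f = (\<lambda>x. c * peval V m p f x)"
  by (induction p) (simp_all add: peval_pCons Mop_scale algebra_simps)

lemma peval_f_add: "peval V m p (\<lambda>x. f x + g x) = (\<lambda>x. peval V m p f x + peval V m p g x)"
  by (induction p) (simp_all add: peval_pCons Mop_add algebra_simps)

lemma peval_f_scale: "peval V m p (\<lambda>x. c * f x) = (\<lambda>x. c * peval V m p f x)"
  by (induction p) (simp_all add: peval_pCons Mop_add Mop_scale algebra_simps)

lemma peval_f_diff: "peval V m p (\<lambda>x. f x - g x) = (\<lambda>x. peval V m p f x - peval V m p g x)"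
proof -
  have "peval V m p (\<lambda>x. f x - g x) = peval V m p (\<lambda>x. f x + (-1) * g x)" by simp
  also have "\<dots> = (\<lambda>x. peval V m p f x - peval V m p g x)"
    by (simp only: peval_f_add peval_f_scale) simp
  finally show ?thesis .
qed

lemma peval_mult: "peval V m (p * q) f = peval V m p (peval V m q f)"
  by (induction p) (simp_all add: peval_pCons peval_add peval_smult)

lemma peval_lin: "peval V m [:-z, 1:] g = (\<lambda>x. Mop V m g x - z * g x)"
  by (simp add: peval_pCons)

lemma peval_cong: "(\<forall>y\<in>V. f y = g y) \<Longrightarrow> x \<in> V \<Longrightarrow> peval V m p f x = peval V m p g x"
proof (induction p arbitrary: x)
  case 0 then show ?case by simp
next
  case (pCons a p)
  have "Mop V m (peval V m p f) = Mop V m (peval V m p g)"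
    by (rule Mop_cong) (use pCons in auto)
  then show ?case using pCons by (simp add: peval_pCons)
qed

lemma peval_eigen:
  assumes "\<forall>x\<in>V. Mop V m g x = z * g x"
  shows "x \<in> V \<Longrightarrow> peval V m p g x = poly p z * g x"
proof (induction p arbitrary: x)
  case 0 then show ?case by simp
next
  case (pCons a p)
  have "Mop V m (peval V m p g) = Mop V m (\<lambda>y. poly p z * g y)"
    by (rule Mop_cong) (use pCons in auto)
  then have "Mop V m (peval V m p g) x = poly p z * (z * g x)"
    using assms pCons by (simp add: Mop_scale)
  then show ?case by (simp add: peval_pCons algebra_simps)
qed

definition ip :: "'v set \<Rightarrow> ('v \<Rightarrow> complex) \<Rightarrow> ('v \<Rightarrow> complex) \<Rightarrow> complex" where
  "ip V f g = (\<Sum>x\<in>V. cnj (f x) * g x)"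

definition symm :: "'v set \<Rightarrow> ('v \<Rightarrow> 'v \<Rightarrow> real) \<Rightarrow> bool" where
  "symm V m \<longleftrightarrow> (\<forall>x\<in>V. \<forall>y\<in>V. m x y = m y x)"

lemma Mop_selfadj:
  assumes "symm V m"
  shows "ip V (Mop V m f) g = ip V f (Mop V m g)"
proof -
  have "ip V (Mop V m f) g = (\<Sum>x\<in>V. \<Sum>y\<in>V. complex_of_real (m x y) * cnj (f y) * g x)"
    by (simp add: ip_def Mop_def sum_distrib_right)
  also have "\<dots> = (\<Sum>y\<in>V. \<Sum>x\<in>V. complex_of_real (m x y) * cnj (f y) * g x)"
    by (rule sum.swap)
  also have "\<dots> = (\<Sum>y\<in>V. \<Sum>x\<in>V. cnj (f y) * (complex_of_real (m y x) * g x))"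
    using assms unfolding symm_def by (intro sum.cong refl) (simp add: algebra_simps)
  also have "\<dots> = ip V f (Mop V m g)"
    by (simp add: ip_def Mop_def sum_distrib_left)
  finally show ?thesis .
qed

lemma ip_self_zero:
  assumes "finite V" "ip V f f = 0" "x \<in> V"
  shows "f x = 0"
proof -
  have "ip V f f = complex_of_real (\<Sum>x\<in>V. (Re (f x))\<^sup>2 + (Im (f x))\<^sup>2)"
    unfolding ip_def of_real_sum
    by (intro sum.cong refl) (metis complex_mult_cnj mult.commute)
  then have "complex_of_real (\<Sum>x\<in>V. (Re (f x))\<^sup>2 + (Im (f x))\<^sup>2) = 0" using assms by simp
  then have "(\<Sum>x\<in>V. (Re (f x))\<^sup>2 + (Im (f x))\<^sup>2) = 0" by (simp only: of_real_eq_0_iff)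
  then have "\<forall>x\<in>V. (Re (f x))\<^sup>2 + (Im (f x))\<^sup>2 = 0"
    using assms(1) by (subst (asm) sum_nonneg_eq_0_iff) auto
  then show ?thesis using assms(3) by (simp add: complex_eq_iff)
qed


definition realeig :: "'v set \<Rightarrow> ('v \<Rightarrow> 'v \<Rightarrow> real) \<Rightarrow> real \<Rightarrow> bool" where
  "realeig V m lam \<longleftrightarrow> (\<exists>g :: 'v \<Rightarrow> real. (\<exists>v\<in>V. g v \<noteq> 0) \<and>
      (\<forall>u\<in>V. (\<Sum>v\<in>V. m u v * g v) = lam * g u))"

inductive goodsum :: "'v set \<Rightarrow> ('v \<Rightarrow> 'v \<Rightarrow> real) \<Rightarrow> (real \<Rightarrow> bool) \<Rightarrow> ('v \<Rightarrow> complex) \<Rightarrow> bool"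
  for V m P where
  gs0: "goodsum V m P (\<lambda>x. 0)"
| gsS: "goodsum V m P f \<Longrightarrow> P lam \<Longrightarrow> (\<forall>x\<in>V. Mop V m g x = complex_of_real lam * g x)
          \<Longrightarrow> goodsum V m P (\<lambda>x. f x + g x)"

lemma eig_real:
  assumes "symm V m" "finite V" "\<forall>x\<in>V. Mop V m g x = z * g x" "v \<in> V" "g v \<noteq> 0"
  shows "cnj z = z"
proof -
  have nz: "ip V g g \<noteq> 0" using ip_self_zero[OF assms(2) _ assms(4)] assms(5) by metis
  have "ip V (Mop V m g) g = (\<Sum>x\<in>V. cnj z * (cnj (g x) * g x))"
    unfolding ip_def by (intro sum.cong refl) (simp add: assms(3))
  also have "\<dots> = cnj z * ip V g g" by (simp add: ip_def sum_distrib_left)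
  finally have 1: "ip V (Mop V m g) g = cnj z * ip V g g" .
  have "ip V g (Mop V m g) = (\<Sum>x\<in>V. z * (cnj (g x) * g x))"
    unfolding ip_def by (intro sum.cong refl) (simp add: assms(3))
  also have "\<dots> = z * ip V g g" by (simp add: ip_def sum_distrib_left)
  finally have 2: "ip V g (Mop V m g) = z * ip V g g" .
  have "cnj z * ip V g g = ip V (Mop V m g) g" using 1 by simp
  also have "\<dots> = ip V g (Mop V m g)" by (rule Mop_selfadj[OF assms(1)])
  also have "\<dots> = z * ip V g g" by (rule 2)
  finally have "cnj z * ip V g g = z * ip V g g" .
  then show ?thesis using nz by (metis mult_cancel_right)
qed

lemma eig_realeig:
  assumes "\<forall>x\<in>V. Mop V m g x = complex_of_real r * g x" "v \<in> V" "g v \<noteq> 0"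
  shows "realeig V m r"
proof -
  have re: "(\<Sum>y\<in>V. m u y * Re (g y)) = r * Re (g u)" if "u \<in> V" for u
  proof -
    have "(\<Sum>y\<in>V. m u y * Re (g y)) = Re (Mop V m g u)" by (simp add: Mop_def Re_sum)
    then show ?thesis using assms(1) that by simp
  qed
  have im: "(\<Sum>y\<in>V. m u y * Im (g y)) = r * Im (g u)" if "u \<in> V" for u
  proof -
    have "(\<Sum>y\<in>V. m u y * Im (g y)) = Im (Mop V m g u)" by (simp add: Mop_def Im_sum)
    then show ?thesis using assms(1) that by simp
  qed
  show ?thesis
  proof (cases "Re (g v) = 0")
    case True
    then have "Im (g v) \<noteq> 0" using assms(3) complex_eq_iff by force
    then show ?thesis unfolding realeig_def
      by (intro exI[of _ "\<lambda>y. Im (g y)"]) (use im assms(2) in auto)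
  next
    case False
    then show ?thesis unfolding realeig_def
      by (intro exI[of _ "\<lambda>y. Re (g y)"]) (use re assms(2) in auto)
  qed
qed

lemma sq_kernel:
  assumes "symm V m" "finite V" "cnj z = z"
    and "\<forall>x\<in>V. Mop V m (\<lambda>x. Mop V m g x - z * g x) x - z * (Mop V m g x - z * g x) = 0"
  shows "\<forall>x\<in>V. Mop V m g x - z * g x = 0"
proof -
  define k where "k = (\<lambda>x. Mop V m g x - z * g x)"
  have kx: "\<And>x. k x = Mop V m g x - z * g x" by (simp add: k_def)
  have "ip V k k = (\<Sum>x\<in>V. cnj (k x) * Mop V m g x - z * (cnj (k x) * g x))"
    unfolding ip_def by (rule sum.cong[OF refl]) (metis kx right_diff_distrib mult.left_commute)
  also have "\<dots> = ip V k (Mop V m g) - z * ip V k g"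
    by (simp add: ip_def sum_subtractf sum_distrib_left)
  also have "\<dots> = ip V (Mop V m k) g - z * ip V k g" using Mop_selfadj[OF assms(1)] by simp
  also have "\<dots> = (\<Sum>x\<in>V. cnj (Mop V m k x - z * k x) * g x)"
    using assms(3) by (simp add: ip_def algebra_simps sum_subtractf sum_distrib_left)
  also have "\<dots> = 0" using assms(4) unfolding k_def by simp
  finally show ?thesis using ip_self_zero[OF assms(2)] unfolding k_def by blast
qed

lemma core:
  assumes "finite V" "symm V m"
  shows "p \<noteq> 0 \<Longrightarrow> \<forall>x\<in>V. peval V m p f x = 0 \<Longrightarrow>
     \<exists>f'. goodsum V m (realeig V m) f' \<and> (\<forall>x\<in>V. f' x = f x)"
proof (induction "degree p" arbitrary: p f rule: less_induct)
  case less
  show ?case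
  proof (cases "degree p = 0")
    case True
    then obtain c where p: "p = [:c:]" by (metis degree_eq_zeroE)
    with less have c0: "c \<noteq> 0" by auto
    have "\<forall>x\<in>V. f x = 0" using less.prems p c0 by (simp add: peval_pCons)
    then show ?thesis using gs0[of V m "realeig V m"] by auto
  next
    case False
    then obtain z where "poly p z = 0" using alg_closed_imp_poly_has_root by blast
    then obtain q where pq: "p = [:-z,1:] * q" by (auto simp: poly_eq_0_iff_dvd dvd_def)
    have q0: "q \<noteq> 0" using less.prems pq by auto
    have "degree p = 1 + degree q" unfolding pq by (subst degree_mult_eq) (use q0 in auto)
    then have dq: "degree q < degree p" by simp
    define g where "g = peval V m q f"
    have eig: "\<forall>x\<in>V. Mop V m g x = z * g x"
    proof -
      have "peval V m p f = (\<lambda>x. Mop V m g x - z * g x)"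
        by (simp only: pq g_def peval_mult peval_lin)
      then show ?thesis using less.prems(2) by (simp add: right_diff_distrib)
    qed
    show ?thesis
    proof (cases "\<forall>x\<in>V. g x = 0")
      case True then show ?thesis using less.hyps[OF dq q0] g_def by auto
    next
      case False
      then obtain v where v: "v\<in>V" "g v \<noteq> 0" by auto
      have zr: "cnj z = z" using eig_real[OF assms(2,1) eig v] .
      have cq: "poly q z \<noteq> 0"
      proof
        assume "poly q z = 0"
        then obtain r where qr: "q = [:-z,1:] * r" by (auto simp: poly_eq_0_iff_dvd dvd_def)
        define k where "k = peval V m r f"
        have "\<forall>x\<in>V. Mop V m (\<lambda>x. Mop V m k x - z * k x) x - z * (Mop V m k x - z * k x) = 0"
        proof -
          have "peval V m p f = (\<lambda>x. Mop V m (\<lambda>x. Mop V m k x - z * k x) x - z * (Mop V m k x - z * k x))"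
            by (simp only: pq qr k_def peval_mult peval_lin)
          then show ?thesis using less.prems(2) by simp
        qed
        then have "\<forall>x\<in>V. Mop V m k x - z * k x = 0" using sq_kernel[OF assms(2,1) zr] by blast
        moreover have "g = (\<lambda>x. Mop V m k x - z * k x)"
          by (simp only: g_def qr k_def peval_mult peval_lin)
        ultimately have "\<forall>x\<in>V. g x = 0" by simp
        with False show False by simp
      qed
      define c where "c = poly q z"
      define ci where "ci = inverse c"
      define h where "h = (\<lambda>x. f x - ci * g x)"
      have "peval V m q h = (\<lambda>x. peval V m q f x - peval V m q (\<lambda>x. ci * g x) x)"
        unfolding h_def by (rule peval_f_diff)
      also have "\<dots> = (\<lambda>x. g x - ci * peval V m q g x)"
        by (simp only: peval_f_scale g_def)
      finally have hq: "peval V m q h = (\<lambda>x. g x - ci * peval V m q g x)" .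
      have "\<forall>x\<in>V. peval V m q h x = 0"
        using peval_eigen[OF eig] cq hq unfolding ci_def c_def by simp
      then obtain h' where h': "goodsum V m (realeig V m) h'" "\<forall>x\<in>V. h' x = h x"
        using less.hyps[OF dq q0] by blast
      have zre: "z = complex_of_real (Re z)" using zr by (simp add: complex_eq_iff)
      have eig2: "\<forall>x\<in>V. Mop V m (\<lambda>x. ci * g x) x = complex_of_real (Re z) * (ci * g x)"
        using eig zre by (simp add: Mop_scale)
      have "ci * g v \<noteq> 0" using v cq c_def ci_def by simp
      then have "realeig V m (Re z)" using eig_realeig[OF eig2 v(1)] by blast
      then have "goodsum V m (realeig V m) (\<lambda>x. h' x + ci * g x)"
        using gsS[OF h'(1) _ eig2] by blast
      moreover have "\<forall>x\<in>V. h' x + ci * g x = f x" using h'(2) h_def by simp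
      ultimately show ?thesis by blast
    qed
  qed
qed


fun Mpow :: "'v set \<Rightarrow> ('v \<Rightarrow> 'v \<Rightarrow> real) \<Rightarrow> nat \<Rightarrow> ('v \<Rightarrow> complex) \<Rightarrow> 'v \<Rightarrow> complex" where
  "Mpow V m 0 f = f"
| "Mpow V m (Suc k) f = Mop V m (Mpow V m k f)"

lemma peval_monom: "peval V m (monom a k) f = (\<lambda>x. a * Mpow V m k f x)"
  by (induction k) (simp_all add: monom_Suc peval_pCons Mop_scale monom_0)

lemma peval_diff: "peval V m (p - q) f = (\<lambda>x. peval V m p f x - peval V m q f x)"
proof -
  have "peval V m (p - q) f = peval V m (p + smult (-1) q) f" by simp
  also have "\<dots> = (\<lambda>x. peval V m p f x - peval V m q f x)"
    by (simp only: peval_add peval_smult) simp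
  finally show ?thesis .
qed

lemma peval_sum: "peval V m (\<Sum>k\<in>K. p k) f = (\<lambda>x. \<Sum>k\<in>K. peval V m (p k) f x)"
  by (induction K rule: infinite_finite_induct) (simp_all add: peval_add)

lemma fsum_apply: "(\<Sum>a\<in>A. (f a :: 'v \<Rightarrow> complex)) x = (\<Sum>a\<in>A. f a x)"
  by (induction A rule: infinite_finite_induct) (simp_all add: plus_fun_def)

lemma fun_vs: "vector_space (\<lambda>(c::complex) (f::'v \<Rightarrow> complex) x. c * f x)"
  by unfold_locales (simp_all add: plus_fun_def distrib_left distrib_right mult.assoc)

lemma annih:
  assumes "finite V"
  shows "\<exists>p. p \<noteq> 0 \<and> (\<forall>x\<in>V. peval V m p f x = 0)"
proof -
  define n where "n = card V"
  define r where "r k = (\<lambda>x. if x \<in> V then Mpow V m k f x else 0)" for k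
  show ?thesis
  proof (cases "inj_on r {..n}")
    case False
    then obtain i j where ij: "i \<le> n" "j \<le> n" "i \<noteq> j" "r i = r j" unfolding inj_on_def by auto
    define p where "p = monom (1::complex) i - monom 1 j"
    have "coeff p i = 1" using ij by (simp add: p_def coeff_monom)
    then have "p \<noteq> 0" by auto
    moreover have "\<forall>x\<in>V. peval V m p f x = 0"
    proof
      fix x assume "x \<in> V"
      then have "Mpow V m i f x = Mpow V m j f x" using ij(4) unfolding r_def by meson
      then show "peval V m p f x = 0" by (simp add: p_def peval_diff peval_monom)
    qed
    ultimately show ?thesis by blast
  next
    case True
    interpret vs: vector_space "\<lambda>(c::complex) (f::'v \<Rightarrow> complex) x. c * f x" by (rule fun_vs)
    define T where "T = (\<lambda>v. (\<lambda>x. if x = v then 1 else 0 :: complex)) ` V"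
    have span: "r ` {..n} \<subseteq> vs.span T"
    proof
      fix s assume "s \<in> r ` {..n}"
      then obtain k where s: "s = r k" by auto
      have "s = (\<Sum>v\<in>V. (\<lambda>x. Mpow V m k f v * (if x = v then 1 else 0)))"
        unfolding s r_def by (rule ext) (simp add: fsum_apply assms if_distrib cong: if_cong)
      also have "\<dots> \<in> vs.span T"
        by (intro vs.span_sum vs.span_scale vs.span_base) (auto simp: T_def)
      finally show "s \<in> vs.span T" .
    qed
    have c1: "card (r ` {..n}) = n + 1" using True by (simp add: card_image)
    have c2: "card T \<le> n" unfolding T_def n_def by (rule card_image_le[OF assms])
    have "\<not> vs.independent (r ` {..n})"
      using vs.independent_span_bound[OF _ _ span] c1 c2 assms T_def by auto
    then obtain t u where tu: "finite t" "t \<subseteq> r ` {..n}"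
        "(\<Sum>v\<in>t. (\<lambda>x. u v * v x)) = 0" "\<exists>v\<in>t. u v \<noteq> 0"
      unfolding vs.dependent_explicit by blast
    define c where "c k = (if r k \<in> t then u (r k) else 0)" for k
    define p where "p = (\<Sum>k\<le>n. monom (c k) k)"
    have cp: "coeff p k = c k" if "k \<le> n" for k
      using that by (simp add: p_def coeff_sum coeff_monom)
    obtain v where v: "v \<in> t" "u v \<noteq> 0" using tu by blast
    then obtain k where k: "k \<le> n" "v = r k" using tu(2) by blast
    have "coeff p k \<noteq> 0" using cp[OF k(1)] v k by (simp add: c_def)
    then have "p \<noteq> 0" by auto
    moreover have "\<forall>x\<in>V. peval V m p f x = 0"
    proof
      fix x assume x: "x \<in> V"
      define K where "K = {k\<in>{..n}. r k \<in> t}"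
      have "peval V m p f x = (\<Sum>k\<le>n. c k * r k x)"
        using x by (simp add: p_def peval_sum peval_monom r_def)
      also have "\<dots> = (\<Sum>k\<in>K. u (r k) * r k x)"
        by (rule sum.mono_neutral_cong_right) (auto simp: K_def c_def)
      also have "\<dots> = (\<Sum>s\<in>r ` K. u s * s x)"
        by (rule sum.reindex[symmetric, unfolded comp_def]) (use True in \<open>auto simp: K_def inj_on_def\<close>)
      also have "r ` K = t" using tu(2) unfolding K_def by auto
      also have "(\<Sum>s\<in>t. u s * s x) = (\<Sum>v\<in>t. (\<lambda>x. u v * v x)) x" by (simp add: fsum_apply)
      also have "\<dots> = 0" using tu(3) by simp
      finally show "peval V m p f x = 0" .
    qed
    ultimately show ?thesis by blast
  qed
qed

theorem spectral:
  assumes "finite V" "symm V m"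
  shows "\<exists>f'. goodsum V m (realeig V m) f' \<and> (\<forall>x\<in>V. f' x = f x)"
  using annih[OF assms(1)] core[OF assms] by blast



lemma adj_eig_realeig: "adj_eigenvalue G lam = realeig (fst G) (adj G) lam"
  by (simp add: adj_eigenvalue_def realeig_def)

lemma simple_symm: "simple_graph G \<Longrightarrow> symm (fst G) (adj G)"
  by (auto simp: simple_graph_def symm_def adj_def)

lemma dprod_Nil_V: "fst (dprod []) = {[]}" by (auto simp: dprod_def)
lemma dprod_Nil_E: "snd (dprod []) xs ys \<longleftrightarrow> xs = [] \<and> ys = []" by (auto simp: dprod_def)

lemma dprod_Cons_V: "fst (dprod (G#Gs)) = (\<lambda>(x,xs). x#xs) ` (fst G \<times> fst (dprod Gs))"
proof (intro set_eqI iffI)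
  fix l assume "l \<in> fst (dprod (G#Gs))"
  then have l: "length l = Suc (length Gs)" "\<forall>j<Suc (length Gs). l!j \<in> fst ((G#Gs)!j)"
    by (auto simp: dprod_def)
  then obtain x xs where lx: "l = x#xs" by (cases l) auto
  have "x \<in> fst G" using l(2)[rule_format, of 0] lx by simp
  moreover have "xs \<in> fst (dprod Gs)"
  proof -
    have "xs ! j \<in> fst (Gs ! j)" if "j < length Gs" for j
      using l(2)[rule_format, of "Suc j"] lx that by simp
    then show ?thesis using l(1) lx by (simp add: dprod_def)
  qed
  ultimately show "l \<in> (\<lambda>(x,xs). x#xs) ` (fst G \<times> fst (dprod Gs))" using lx by auto
next
  fix l assume "l \<in> (\<lambda>(x,xs). x#xs) ` (fst G \<times> fst (dprod Gs))"
  then obtain x xs where "l = x#xs" "x \<in> fst G" "xs \<in> fst (dprod Gs)" by auto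
  then show "l \<in> fst (dprod (G#Gs))" by (auto simp: dprod_def less_Suc_eq_0_disj)
qed

lemma dprod_Cons_E: "snd (dprod (G#Gs)) (x#xs) (y#ys) \<longleftrightarrow> snd G x y \<and> snd (dprod Gs) xs ys"
  by (auto simp: dprod_def less_Suc_eq_0_disj)

lemma adj_Cons: "adj (dprod (G#Gs)) (x#xs) (y#ys) = adj G x y * adj (dprod Gs) xs ys"
  by (simp add: adj_def dprod_Cons_E)

lemma sum_Cons: "sum F (fst (dprod (G#Gs))) = (\<Sum>x\<in>fst G. \<Sum>xs\<in>fst (dprod Gs). F (x#xs))"
proof -
  have "sum F (fst (dprod (G#Gs))) = sum (F \<circ> (\<lambda>(x,xs). x#xs)) (fst G \<times> fst (dprod Gs))"
    unfolding dprod_Cons_V by (rule sum.reindex) (auto simp: inj_on_def)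
  also have "\<dots> = (\<Sum>x\<in>fst G. \<Sum>xs\<in>fst (dprod Gs). F (x#xs))"
    by (subst sum.cartesian_product) (simp add: comp_def case_prod_unfold)
  finally show ?thesis .
qed

lemma finite_dprod: "\<forall>G\<in>set Gs. finite (fst G) \<Longrightarrow> finite (fst (dprod Gs))"
  by (induction Gs) (auto simp: dprod_Nil_V dprod_Cons_V)

definition tens :: "('a \<Rightarrow> complex) \<Rightarrow> ('a list \<Rightarrow> complex) \<Rightarrow> 'a list \<Rightarrow> complex" where
  "tens f h = (\<lambda>l. f (hd l) * h (tl l))"

lemma Mop_tens:
  "Mop (fst (dprod (G#Gs))) (adj (dprod (G#Gs))) (tens g h) (x#xs) =
   Mop (fst G) (adj G) g x * Mop (fst (dprod Gs)) (adj (dprod Gs)) h xs"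
  by (simp add: Mop_def sum_Cons adj_Cons tens_def sum_product algebra_simps)

lemma tens_eig:
  assumes "\<forall>x\<in>fst G. Mop (fst G) (adj G) g x = complex_of_real a * g x"
    and "\<forall>xs\<in>fst (dprod Gs). Mop (fst (dprod Gs)) (adj (dprod Gs)) h xs = complex_of_real b * h xs"
  shows "\<forall>l\<in>fst (dprod (G#Gs)). Mop (fst (dprod (G#Gs))) (adj (dprod (G#Gs))) (tens g h) l
           = complex_of_real (a * b) * tens g h l"
proof
  fix l assume "l \<in> fst (dprod (G#Gs))"
  then obtain x xs where l: "l = x#xs" "x \<in> fst G" "xs \<in> fst (dprod Gs)"
    by (auto simp: dprod_Cons_V)
  show "Mop (fst (dprod (G#Gs))) (adj (dprod (G#Gs))) (tens g h) l = complex_of_real (a * b) * tens g h l"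
  proof -
    have "Mop (fst (dprod (G#Gs))) (adj (dprod (G#Gs))) (tens g h) (x#xs) =
      Mop (fst G) (adj G) g x * Mop (fst (dprod Gs)) (adj (dprod Gs)) h xs" by (rule Mop_tens)
    then show ?thesis using assms l by (simp add: tens_def)
  qed
qed

lemma goodsum_add:
  "goodsum V m P f2 \<Longrightarrow> goodsum V m P f1 \<Longrightarrow> goodsum V m P (\<lambda>x. f1 x + f2 x)"
proof (induction rule: goodsum.induct)
  case gs0 then show ?case by simp
next
  case (gsS f lam g)
  have "goodsum V m P (\<lambda>x. (f1 x + f x) + g x)"
    by (rule goodsum.gsS[OF gsS.IH[OF gsS.prems] gsS.hyps(2,3)])
  then show ?case by (simp add: add.assoc)
qed

lemma goodsum_mono: "goodsum V m P f \<Longrightarrow> (\<And>l. P l \<Longrightarrow> Q l) \<Longrightarrow> goodsum V m Q f"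
proof (induction rule: goodsum.induct)
  case gs0 show ?case by (rule goodsum.gs0)
next
  case (gsS f lam g) then show ?case using goodsum.gsS by blast
qed

lemma tens_goodsum1:
  assumes "\<forall>x\<in>fst G. Mop (fst G) (adj G) g x = complex_of_real a * g x" "P a"
  shows "goodsum (fst (dprod Gs)) (adj (dprod Gs)) Q h \<Longrightarrow>
    goodsum (fst (dprod (G#Gs))) (adj (dprod (G#Gs))) (\<lambda>l. \<exists>a b. P a \<and> Q b \<and> l = a * b) (tens g h)"
proof (induction rule: goodsum.induct)
  case gs0
  have "tens g (\<lambda>x. 0) = (\<lambda>x. 0)" by (simp add: tens_def)
  then show ?case using goodsum.gs0 by metis
next
  case (gsS h' b k)
  have eq: "tens g (\<lambda>x. h' x + k x) = (\<lambda>l. tens g h' l + tens g k l)"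
    by (simp add: tens_def fun_eq_iff distrib_left)
  have "goodsum (fst (dprod (G#Gs))) (adj (dprod (G#Gs))) (\<lambda>l. \<exists>a b. P a \<and> Q b \<and> l = a * b)
     (\<lambda>l. tens g h' l + tens g k l)"
    by (rule goodsum.gsS[OF gsS.IH _ tens_eig[OF assms(1) gsS.hyps(3)]]) (use assms(2) gsS.hyps(2) in blast)
  then show ?case using eq by simp
qed

lemma tens_goodsum:
  "goodsum (fst G) (adj G) P f \<Longrightarrow> goodsum (fst (dprod Gs)) (adj (dprod Gs)) Q h \<Longrightarrow>
    goodsum (fst (dprod (G#Gs))) (adj (dprod (G#Gs))) (\<lambda>l. \<exists>a b. P a \<and> Q b \<and> l = a * b) (tens f h)"
proof (induction rule: goodsum.induct)
  case gs0
  have "tens (\<lambda>x. 0) h = (\<lambda>x. 0)" by (simp add: tens_def)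
  then show ?case using goodsum.gs0 by metis
next
  case (gsS f a g)
  have eq: "tens (\<lambda>x. f x + g x) h = (\<lambda>l. tens f h l + tens g h l)"
    by (simp add: tens_def fun_eq_iff distrib_right)
  show ?case unfolding eq
    by (rule goodsum_add[OF tens_goodsum1[where g=g and h=h and G=G and Gs=Gs and a=a and P=P and Q=Q, OF gsS.hyps(3,2) gsS.prems] gsS.IH[OF gsS.prems]])
qed

definition p2v :: "nat \<Rightarrow> real \<Rightarrow> bool" where
  "p2v c lam \<longleftrightarrow> (\<exists>q::int. odd q \<and> lam = 2 ^ c * of_int q)"

lemma p2v_mult: "p2v c a \<Longrightarrow> p2v d b \<Longrightarrow> p2v (c + d) (a * b)"
  unfolding p2v_def
proof (elim exE conjE)
  fix o1 o2 :: int assume "odd o1" "a = 2 ^ c * of_int o1" "odd o2" "b = 2 ^ d * of_int o2"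
  then show "\<exists>q::int. odd q \<and> a * b = 2 ^ (c + d) * of_int q"
    by (intro exI[of _ "o1 * o2"]) (simp add: power_add algebra_simps)
qed

lemma prod_goodsum:
  assumes "\<forall>G\<in>set Gs. finite (fst G) \<and> (\<forall>w\<in>fst G. \<exists>f. goodsum (fst G) (adj G) (p2v (cf G)) f \<and>
              (\<forall>x\<in>fst G. f x = (if x = w then 1 else 0)))"
  shows "\<forall>u\<in>fst (dprod Gs). \<exists>f. goodsum (fst (dprod Gs)) (adj (dprod Gs)) (p2v (sum_list (map cf Gs))) f \<and>
              (\<forall>x\<in>fst (dprod Gs). f x = (if x = u then 1 else 0))"
  using assms
proof (induction Gs)
  case Nil
  show ?case
  proof
    fix u assume "u \<in> fst (dprod ([] :: 'a graph list))"
    then have u: "u = []" by (simp add: dprod_Nil_V)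
    have p: "p2v 0 1" unfolding p2v_def by (intro exI[of _ 1]) simp
    have "goodsum (fst (dprod ([] :: 'a graph list))) (adj (dprod [])) (p2v 0) (\<lambda>x. 0 + 1)"
      apply (rule goodsum.gsS[where lam=1])
        apply (rule goodsum.gs0)
       apply (rule p)
      apply (simp add: Mop_def dprod_Nil_V adj_def dprod_Nil_E)
      done
    then show "\<exists>f. goodsum (fst (dprod ([] :: 'a graph list))) (adj (dprod [])) (p2v (sum_list (map cf []))) f \<and>
              (\<forall>x\<in>fst (dprod ([] :: 'a graph list)). f x = (if x = u then 1 else 0))"
      using u by (auto simp: dprod_Nil_V)
  qed
next
  case (Cons G Gs)
  show ?case
  proof
    fix u assume "u \<in> fst (dprod (G#Gs))"
    then obtain x xs where u: "u = x#xs" "x\<in>fst G" "xs \<in> fst (dprod Gs)" by (auto simp: dprod_Cons_V)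
    obtain f where f: "goodsum (fst G) (adj G) (p2v (cf G)) f" "\<forall>y\<in>fst G. f y = (if y = x then 1 else 0)"
      using Cons.prems u by auto
    obtain h where h: "goodsum (fst (dprod Gs)) (adj (dprod Gs)) (p2v (sum_list (map cf Gs))) h"
        "\<forall>ys\<in>fst (dprod Gs). h ys = (if ys = xs then 1 else 0)"
      using Cons.IH Cons.prems u by auto
    have "goodsum (fst (dprod (G#Gs))) (adj (dprod (G#Gs))) (p2v (cf G + sum_list (map cf Gs))) (tens f h)"
      by (rule goodsum_mono[OF tens_goodsum[OF f(1) h(1)]]) (auto intro: p2v_mult)
    moreover have "\<forall>l\<in>fst (dprod (G#Gs)). tens f h l = (if l = u then 1 else 0)"
    proof
      fix l assume "l \<in> fst (dprod (G#Gs))"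
      then obtain y ys where l: "l = y#ys" "y \<in> fst G" "ys \<in> fst (dprod Gs)" by (auto simp: dprod_Cons_V)
      then show "tens f h l = (if l = u then 1 else 0)" using f(2) h(2) u by (simp add: tens_def)
    qed
    ultimately show "\<exists>f. goodsum (fst (dprod (G#Gs))) (adj (dprod (G#Gs))) (p2v (sum_list (map cf (G#Gs)))) f \<and>
              (\<forall>x\<in>fst (dprod (G#Gs)). f x = (if x = u then 1 else 0))" by auto
  qed
qed

lemma rdeg:
  assumes fin: "finite (fst G)"
  shows "real (Defs.degree G u) = (\<Sum>v\<in>fst G. adj G u v)"
proof -
  have "(\<Sum>v\<in>fst G. adj G u v) = (\<Sum>v\<in>{v\<in>fst G. snd G u v}. (1::real))"
    by (simp only: adj_def sum.inter_filter[OF fin])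
  moreover have "real (card {v\<in>fst G. snd G u v}) = (\<Sum>v\<in>{v\<in>fst G. snd G u v}. (1::real))"
    by (rule real_of_card)
  ultimately show ?thesis unfolding Defs.degree_def by linarith
qed

lemma dprod_rdeg:
  assumes "\<forall>G\<in>set Gs. finite (fst G) \<and> (\<exists>K. \<forall>x\<in>fst G. (\<Sum>y\<in>fst G. adj G x y) = K)"
  shows "\<exists>K. \<forall>xs\<in>fst (dprod Gs). (\<Sum>ys\<in>fst (dprod Gs). adj (dprod Gs) xs ys) = K"
  using assms
proof (induction Gs)
  case Nil
  then show ?case by (auto simp: dprod_Nil_V)
next
  case (Cons G Gs)
  obtain K1 where K1: "\<forall>x\<in>fst G. (\<Sum>y\<in>fst G. adj G x y) = K1" using Cons.prems by auto
  obtain K2 where K2: "\<forall>xs\<in>fst (dprod Gs). (\<Sum>ys\<in>fst (dprod Gs). adj (dprod Gs) xs ys) = K2"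
    using Cons by auto
  have "\<forall>l\<in>fst (dprod (G#Gs)). (\<Sum>ys\<in>fst (dprod (G#Gs)). adj (dprod (G#Gs)) l ys) = K1 * K2"
  proof
    fix l assume "l \<in> fst (dprod (G#Gs))"
    then obtain x xs where l: "l = x#xs" "x \<in> fst G" "xs \<in> fst (dprod Gs)" by (auto simp: dprod_Cons_V)
    have "(\<Sum>ys\<in>fst (dprod (G#Gs)). adj (dprod (G#Gs)) l ys) =
        (\<Sum>y\<in>fst G. adj G x y) * (\<Sum>ys\<in>fst (dprod Gs). adj (dprod Gs) xs ys)"
      unfolding sum_Cons l(1) adj_Cons by (simp add: sum_product)
    then show "(\<Sum>ys\<in>fst (dprod (G#Gs)). adj (dprod (G#Gs)) l ys) = K1 * K2" using K1 K2 l by simp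
  qed
  then show ?case by blast
qed



lemma nu2_decomp:
  assumes "nu2 n = enat c" shows "\<exists>q. odd q \<and> n = 2^c * q"
proof -
  have n0: "n \<noteq> 0" using assms by (auto simp: nu2_def)
  then have mc: "multiplicity 2 n = c" using assms by (simp add: nu2_def)
  have nu: "\<not> is_unit (2::int)" by simp
  obtain y where y: "n = 2 ^ multiplicity 2 n * y" "\<not> 2 dvd y"
    using multiplicity_decompose'[OF n0 nu] by blast
  then show ?thesis using mc by auto
qed

lemma graph_good:
  assumes sg: "simple_graph G" and reg: "regular G k" and k1: "k \<ge> 1" and ne: "fst G \<noteq> {}"
    and ev: "\<exists>c. \<forall>lam. adj_eigenvalue G lam \<longrightarrow> (\<exists>n::int. lam = of_int n \<and> nu2 n = c)"
  shows "\<exists>c'. \<forall>w\<in>fst G. \<exists>f. goodsum (fst G) (adj G) (p2v c') f \<and>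
            (\<forall>x\<in>fst G. f x = (if x = w then 1 else 0))"
proof -
  obtain c where c: "\<forall>lam. adj_eigenvalue G lam \<longrightarrow> (\<exists>n::int. lam = of_int n \<and> nu2 n = c)"
    using ev by blast
  have fin: "finite (fst G)" using sg by (simp add: simple_graph_def)
  have "adj_eigenvalue G (real k)"
    unfolding adj_eigenvalue_def
  proof (intro exI[of _ "\<lambda>_. 1"] conjI)
    show "\<exists>v\<in>fst G. (1::real) \<noteq> 0" using ne by auto
    show "\<forall>u\<in>fst G. (\<Sum>v\<in>fst G. adj G u v * 1) = real k * 1"
    proof
      fix u assume "u \<in> fst G"
      then have "Defs.degree G u = k" using reg by (simp add: regular_def)
      then show "(\<Sum>v\<in>fst G. adj G u v * 1) = real k * 1" using rdeg[OF fin, of u] by simp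
    qed
  qed
  then obtain n where n: "real k = of_int n" "nu2 n = c" using c by blast
  have "n = int k" using n(1) by (metis of_int_eq_iff of_int_of_nat_eq)
  then have "n \<noteq> 0" using k1 by simp
  then have cc: "c = enat (multiplicity 2 n)" using n(2) by (simp add: nu2_def)
  define c' where "c' = multiplicity 2 n"
  have c': "c = enat c'" using cc c'_def by simp
  have P: "p2v c' lam" if "realeig (fst G) (adj G) lam" for lam
  proof -
    have "adj_eigenvalue G lam" by (subst adj_eig_realeig) (rule that)
    then obtain n' where n0': "lam = of_int n'" "nu2 n' = c" using c by blast
    then have n': "lam = of_int n'" "nu2 n' = enat c'" using c' by auto
    then obtain q where "odd q" "n' = 2^c' * q" using nu2_decomp by blast
    then show ?thesis unfolding p2v_def using n'(1) by (intro exI[of _ q]) simp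
  qed
  show ?thesis
  proof (intro exI[of _ c'] ballI)
    fix w assume "w \<in> fst G"
    obtain f' where f': "goodsum (fst G) (adj G) (realeig (fst G) (adj G)) f'"
        "\<forall>x\<in>fst G. f' x = (if x = w then 1 else 0)"
      using spectral[OF fin simple_symm[OF sg], of "\<lambda>x. if x = w then 1 else 0"] by blast
    have "goodsum (fst G) (adj G) (p2v c') f'" by (rule goodsum_mono[OF f'(1) P])
    then show "\<exists>f. goodsum (fst G) (adj G) (p2v c') f \<and> (\<forall>x\<in>fst G. f x = (if x = w then 1 else 0))"
      using f'(2) by blast
  qed
qed

lemma blow_deg:
  assumes "finite (fst D)" "l \<in> {0,1}"
  shows "Defs.degree (blowup2 D) (l,x) = 2 * Defs.degree D x"
proof -
  have "{w \<in> fst (blowup2 D). snd (blowup2 D) (l,x) w} = {0,1::nat} \<times> {y\<in>fst D. snd D x y}"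
    using assms(2) by (auto simp: blowup2_def)
  then show ?thesis by (simp add: Defs.degree_def card_cartesian_product)
qed

lemma Lmul:
  assumes fin: "finite (fst D)" and deg: "\<forall>x\<in>fst D. Defs.degree D x = K"
    and v: "l \<in> {0,1}" "x \<in> fst D"
  shows "(\<Sum>w\<in>fst (blowup2 D). laplacian (blowup2 D) (l,x) w * h w) =
     of_nat (2*K) * h (l,x) - (\<Sum>y\<in>fst D. complex_of_real (adj D x y) * (h (0,y) + h (1,y)))"
proof -
  let ?W = "fst (blowup2 D)"
  have W: "?W = {0,1} \<times> fst D" by (simp add: blowup2_def)
  have dB: "Defs.degree (blowup2 D) (l,x) = 2*K" using blow_deg[OF fin v(1)] deg v(2) by simp
  have Lw: "laplacian (blowup2 D) (l,x) w * h w =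
      (if (l,x) = w then of_nat (2*K) * h w else 0) - (if snd D x (snd w) then h w else 0)"
    if "w \<in> ?W" for w
    using that v dB by (auto simp: laplacian_def blowup2_def algebra_simps)
  have "(\<Sum>w\<in>?W. laplacian (blowup2 D) (l,x) w * h w) =
      (\<Sum>w\<in>?W. (if (l,x) = w then of_nat (2*K) * h w else 0) - (if snd D x (snd w) then h w else 0))"
    by (rule sum.cong[OF refl Lw])
  also have "\<dots> = (\<Sum>w\<in>?W. (if (l,x) = w then of_nat (2*K) * h w else 0)) -
      (\<Sum>w\<in>?W. if snd D x (snd w) then h w else 0)"
    by (rule sum_subtractf)
  also have "(\<Sum>w\<in>?W. (if (l,x) = w then of_nat (2*K) * h w else 0)) = of_nat (2*K) * h (l,x)"
    using v fin by (simp add: W)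
  also have "(\<Sum>w\<in>?W. if snd D x (snd w) then h w else 0) =
      (\<Sum>y\<in>fst D. complex_of_real (adj D x y) * (h (0,y) + h (1,y)))"
  proof -
    have "(\<Sum>w\<in>?W. if snd D x (snd w) then h w else 0) =
        (\<Sum>(m,y)\<in>{0::nat,1} \<times> fst D. if snd D x y then h (m,y) else 0)"
      unfolding W by (intro sum.cong refl) (auto split: prod.splits)
    also have "\<dots> = (\<Sum>m\<in>{0::nat,1}. \<Sum>y\<in>fst D. if snd D x y then h (m,y) else 0)"
      by (rule sum.cartesian_product[symmetric])
    also have "\<dots> = (\<Sum>y\<in>fst D. (if snd D x y then h (0,y) else 0) + (if snd D x y then h (1,y) else 0))"
      by (subst sum.insert) (simp_all add: sum.distrib)
    also have "\<dots> = (\<Sum>y\<in>fst D. complex_of_real (adj D x y) * (h (0,y) + h (1,y)))"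
      by (intro sum.cong refl) (simp add: adj_def)
    finally show ?thesis .
  qed
  finally show ?thesis .
qed

definition Lpow :: "'b set \<Rightarrow> ('b \<Rightarrow> 'b \<Rightarrow> complex) \<Rightarrow> nat \<Rightarrow> ('b \<Rightarrow> complex) \<Rightarrow> 'b \<Rightarrow> complex" where
  "Lpow W L n h v = (\<Sum>w\<in>W. mat_pow W L n v w * h w)"

lemma Lpow_eig:
  assumes "finite W" "\<forall>v\<in>W. (\<Sum>w\<in>W. L v w * h w) = \<mu> * h v"
  shows "v \<in> W \<Longrightarrow> Lpow W L n h v = \<mu>^n * h v"
proof (induction n arbitrary: v)
  case 0
  have "Lpow W L 0 h v = (\<Sum>w\<in>W. if v = w then h w else 0)"
    unfolding Lpow_def by (intro sum.cong) auto
  then show ?case using assms(1) 0 by simp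
next
  case (Suc n)
  have "Lpow W L (Suc n) h v = (\<Sum>w\<in>W. \<Sum>x\<in>W. L v x * mat_pow W L n x w * h w)"
    by (simp add: Lpow_def sum_distrib_right)
  also have "\<dots> = (\<Sum>x\<in>W. \<Sum>w\<in>W. L v x * mat_pow W L n x w * h w)" by (rule sum.swap)
  also have "\<dots> = (\<Sum>x\<in>W. L v x * Lpow W L n h x)"
    by (simp add: Lpow_def sum_distrib_left mult.assoc)
  also have "\<dots> = (\<Sum>x\<in>W. \<mu>^n * (L v x * h x))"
    by (intro sum.cong refl) (simp add: Suc.IH)
  also have "\<dots> = \<mu>^n * (\<mu> * h v)" using assms(2) Suc.prems by (simp add: sum_distrib_left[symmetric])
  finally show ?case by simp
qed

lemma Lpow_add: "Lpow W L n (\<lambda>w. h1 w + h2 w) v = Lpow W L n h1 v + Lpow W L n h2 v"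
  by (simp add: Lpow_def distrib_left sum.distrib)

lemma Lpow_cong: "(\<forall>w\<in>W. h1 w = h2 w) \<Longrightarrow> Lpow W L n h1 v = Lpow W L n h2 v"
  by (simp add: Lpow_def)

lemma exp_sums: "(\<lambda>n. (\<i> * of_real t)^n / of_nat (fact n) * (\<mu>^n * c)) sums (exp (\<i> * of_real t * \<mu>) * c)"
proof -
  have "(\<lambda>n. (\<i> * of_real t * \<mu>)^n /\<^sub>R fact n) sums exp (\<i> * of_real t * \<mu>)" by (rule exp_converges)
  then have "(\<lambda>n. ((\<i> * of_real t * \<mu>)^n /\<^sub>R fact n) * c) sums (exp (\<i> * of_real t * \<mu>) * c)"
    by (rule sums_mult2)
  moreover have "(\<lambda>n. (\<i> * of_real t)^n / of_nat (fact n) * (\<mu>^n * c)) = (\<lambda>n. ((\<i> * of_real t * \<mu>)^n /\<^sub>R fact n) * c)"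
    by (rule ext) (simp add: scaleR_conv_of_real power_mult_distrib divide_inverse)
  ultimately show ?thesis by simp
qed

lemma exp_odd: assumes "odd (q::int)" shows "exp (\<i> * of_real (pi * of_int q)) = -1"
proof -
  have "exp (\<i> * of_real (pi * of_int q)) = cis (pi * of_int q)" by (simp add: cis_conv_exp)
  also have "\<dots> = -1" using assms by (simp add: cis.ctr complex_eq_iff)
  finally show ?thesis .
qed



lemma series_F:
  assumes fin: "finite (fst D)" and deg: "\<forall>x\<in>fst D. Defs.degree D x = K"
  shows "goodsum (fst D) (adj D) (p2v C) f \<Longrightarrow> l \<in> {0,1} \<Longrightarrow> x \<in> fst D \<Longrightarrow>
     (\<lambda>n. (\<i> * of_real (pi / 2^(Suc C)))^n / of_nat (fact n) *
        Lpow (fst (blowup2 D)) (laplacian (blowup2 D)) n (\<lambda>(m,y). if m = 0 then f y else 0) (l,x))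
       sums (- exp (\<i> * of_real (pi / 2^(Suc C)) * of_nat (2*K)) * (if l = 1 then f x else 0))"
proof (induction arbitrary: l x rule: goodsum.induct)
  case gs0
  have z: "Lpow (fst (blowup2 D)) (laplacian (blowup2 D)) n (\<lambda>(m,y). if m = 0 then (\<lambda>x. 0) y else 0) (l,x) = 0" for n
    unfolding Lpow_def by (rule sum.neutral) (simp add: case_prod_unfold)
  show ?case unfolding z by simp
next
  case (gsS f lam g)
  let ?W = "fst (blowup2 D)"
  let ?L = "laplacian (blowup2 D)"
  define \<tau> where "\<tau> = pi / 2^(Suc C)"
  define E where "E = exp (\<i> * of_real \<tau> * of_nat (2*K))"
  define cc where "cc n = (\<i> * of_real \<tau>)^n / of_nat (fact n)" for n
  obtain q where q: "odd q" "lam = 2^C * of_int q" using gsS.hyps(2) unfolding p2v_def by blast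
  define Gp where "Gp = (\<lambda>(m::nat,y). g y / 2)"
  define Gm where "Gm = (\<lambda>(m::nat,y). (if m = 0 then 1 else -1) * g y / 2)"
  define Ff where "Ff = (\<lambda>(m::nat,y). if m = 0 then f y else 0)"
  have W: "?W = {0,1} \<times> fst D" by (simp add: blowup2_def)
  have finW: "finite ?W" using fin W by simp
  have split: "(\<lambda>(m,y). if m = 0 then f y + g y else 0) = (\<lambda>w. (Ff w + Gp w) + Gm w)"
    by (auto simp: fun_eq_iff Ff_def Gp_def Gm_def)
  have eigp: "\<forall>v\<in>?W. (\<Sum>w\<in>?W. ?L v w * Gp w) = (of_nat (2*K) - 2 * of_real lam) * Gp v"
  proof
    fix v assume "v \<in> ?W"
    then obtain l' x' where v: "v = (l',x')" "l' \<in> {0,1}" "x' \<in> fst D" using W by auto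
    have "(\<Sum>y\<in>fst D. complex_of_real (adj D x' y) * (Gp (0,y) + Gp (1,y))) = Mop (fst D) (adj D) g x'"
      by (simp add: Gp_def Mop_def)
    then show "(\<Sum>w\<in>?W. ?L v w * Gp w) = (of_nat (2*K) - 2 * of_real lam) * Gp v"
      using Lmul[OF fin deg v(2,3), of Gp] gsS.hyps(3) v by (simp add: Gp_def algebra_simps)
  qed
  have eigm: "\<forall>v\<in>?W. (\<Sum>w\<in>?W. ?L v w * Gm w) = of_nat (2*K) * Gm v"
  proof
    fix v assume "v \<in> ?W"
    then obtain l' x' where v: "v = (l',x')" "l' \<in> {0,1}" "x' \<in> fst D" using W by auto
    have "(\<Sum>y\<in>fst D. complex_of_real (adj D x' y) * (Gm (0,y) + Gm (1,y))) = 0"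
      by (simp add: Gm_def)
    then show "(\<Sum>w\<in>?W. ?L v w * Gm w) = of_nat (2*K) * Gm v"
      using Lmul[OF fin deg v(2,3), of Gm] v by simp
  qed
  have lxW: "(l,x) \<in> ?W" using gsS.prems W by auto
  have lp: "Lpow ?W ?L n Gp (l,x) = (of_nat (2*K) - 2 * of_real lam)^n * Gp (l,x)" for n
    by (rule Lpow_eig[OF finW eigp lxW])
  have lm: "Lpow ?W ?L n Gm (l,x) = (of_nat (2*K))^n * Gm (l,x)" for n
    by (rule Lpow_eig[OF finW eigm lxW])
  have s1: "(\<lambda>n. cc n * Lpow ?W ?L n Ff (l,x)) sums (- E * (if l = 1 then f x else 0))"
    using gsS.IH[OF gsS.prems] unfolding cc_def E_def \<tau>_def Ff_def .
  have s2: "(\<lambda>n. cc n * ((of_nat (2*K) - 2 * of_real lam)^n * Gp (l,x))) sums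
      (exp (\<i> * of_real \<tau> * (of_nat (2*K) - 2 * of_real lam)) * Gp (l,x))"
    unfolding cc_def by (rule exp_sums)
  have s3: "(\<lambda>n. cc n * ((of_nat (2*K))^n * Gm (l,x))) sums (E * Gm (l,x))"
    unfolding cc_def E_def by (rule exp_sums)
  have "(\<lambda>n. cc n * Lpow ?W ?L n Ff (l,x) + cc n * ((of_nat (2*K) - 2 * of_real lam)^n * Gp (l,x))
          + cc n * ((of_nat (2*K))^n * Gm (l,x))) sums
     (- E * (if l = 1 then f x else 0) + exp (\<i> * of_real \<tau> * (of_nat (2*K) - 2 * of_real lam)) * Gp (l,x)
       + E * Gm (l,x))"
    by (intro sums_add s1 s2 s3)
  moreover have "(\<lambda>n. cc n * Lpow ?W ?L n (\<lambda>(m,y). if m = 0 then f y + g y else 0) (l,x)) =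
     (\<lambda>n. cc n * Lpow ?W ?L n Ff (l,x) + cc n * ((of_nat (2*K) - 2 * of_real lam)^n * Gp (l,x))
          + cc n * ((of_nat (2*K))^n * Gm (l,x)))"
    unfolding split Lpow_add lp lm by (simp add: distrib_left)
  moreover have "- E * (if l = 1 then f x else 0) + exp (\<i> * of_real \<tau> * (of_nat (2*K) - 2 * of_real lam)) * Gp (l,x)
       + E * Gm (l,x) = - E * (if l = 1 then f x + g x else 0)"
  proof -
    have r: "\<tau> * (2 * lam) = pi * of_int q" unfolding \<tau>_def q(2) by (simp add: field_simps)
    have "\<i> * of_real \<tau> * (of_nat (2*K) - 2 * of_real lam) =
        \<i> * of_real \<tau> * of_nat (2*K) - \<i> * of_real (pi * of_int q)"
      unfolding r[symmetric] by (simp add: algebra_simps)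
    then have "exp (\<i> * of_real \<tau> * (of_nat (2*K) - 2 * of_real lam)) = E / exp (\<i> * of_real (pi * of_int q))"
      unfolding E_def by (simp add: exp_diff)
    also have "\<dots> = - E" using exp_odd[OF q(1)] by simp
    finally have ex: "exp (\<i> * of_real \<tau> * (of_nat (2*K) - 2 * of_real lam)) = - E" .
    show ?thesis using gsS.prems(1) unfolding ex by (auto simp: Gp_def Gm_def algebra_simps)
  qed
  ultimately show ?case unfolding cc_def \<tau>_def E_def by simp
qed

lemma dprod_ne:
  assumes "u \<in> fst (dprod Gs)" "G \<in> set Gs"
  shows "fst G \<noteq> {}"
proof -
  obtain j where j: "j < length Gs" "G = Gs ! j" using assms(2) unfolding in_set_conv_nth by blast
  have "u ! j \<in> fst (Gs ! j)" using assms(1) j(1) by (simp add: dprod_def)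
  then show ?thesis using j by auto
qed

theorem theorem6:
  fixes Gs :: "'a graph list"
  assumes "Gs \<noteq> []"
    and "\<forall>G \<in> set Gs. simple_graph G"
    and "\<forall>G \<in> set Gs. \<exists>k \<ge> 1. regular G k"
    and "\<forall>G \<in> set Gs. \<exists>c. \<forall>lam. adj_eigenvalue G lam \<longrightarrow> (\<exists>n :: int. lam = of_int n \<and> nu2 n = c)"
    and "u \<in> fst (dprod Gs)"
  shows "lap_pst (blowup2 (dprod Gs)) (0, u) (1, u)"
proof -
  define D where "D = dprod Gs"
  have finG: "\<forall>G\<in>set Gs. finite (fst G)" using assms(2) by (simp add: simple_graph_def)
  have finD: "finite (fst D)" using finite_dprod[OF finG] D_def by simp
  have uD: "u \<in> fst D" using assms(5) D_def by simp
  have ne: "fst G \<noteq> {}" if "G \<in> set Gs" for G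
    by (rule dprod_ne[OF assms(5) that])
  have "\<forall>G\<in>set Gs. \<exists>c'. \<forall>w\<in>fst G. \<exists>f. goodsum (fst G) (adj G) (p2v c') f \<and>
            (\<forall>x\<in>fst G. f x = (if x = w then 1 else 0))"
  proof
    fix G assume G: "G \<in> set Gs"
    obtain k where k: "k \<ge> 1" "regular G k" using assms(3) G by blast
    have sgG: "simple_graph G" using assms(2) G by blast
    have evG: "\<exists>c. \<forall>lam. adj_eigenvalue G lam \<longrightarrow> (\<exists>n :: int. lam = of_int n \<and> nu2 n = c)"
      using assms(4) G by blast
    show "\<exists>c'. \<forall>w\<in>fst G. \<exists>f. goodsum (fst G) (adj G) (p2v c') f \<and>
            (\<forall>x\<in>fst G. f x = (if x = w then 1 else 0))"
      by (rule graph_good[OF sgG k(2) k(1) ne[OF G] evG])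
  qed
  then have "\<exists>cf. \<forall>G\<in>set Gs. \<forall>w\<in>fst G. \<exists>f. goodsum (fst G) (adj G) (p2v (cf G)) f \<and>
            (\<forall>x\<in>fst G. f x = (if x = w then 1 else 0))"
    by (rule bchoice)
  then obtain cf where cf: "\<forall>G\<in>set Gs. \<forall>w\<in>fst G. \<exists>f. goodsum (fst G) (adj G) (p2v (cf G)) f \<and>
            (\<forall>x\<in>fst G. f x = (if x = w then 1 else 0))"
    by (elim exE)
  define C where "C = sum_list (map cf Gs)"
  have pg: "\<forall>u\<in>fst (dprod Gs). \<exists>f. goodsum (fst (dprod Gs)) (adj (dprod Gs)) (p2v (sum_list (map cf Gs))) f \<and>
              (\<forall>x\<in>fst (dprod Gs). f x = (if x = u then 1 else 0))"
    by (rule prod_goodsum) (use finG cf in blast)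
  obtain f where f: "goodsum (fst D) (adj D) (p2v C) f" "\<forall>x\<in>fst D. f x = (if x = u then 1 else 0)"
    using pg assms(5) unfolding D_def C_def by blast
  have "\<exists>K. \<forall>xs\<in>fst D. (\<Sum>ys\<in>fst D. adj D xs ys) = K"
    unfolding D_def
  proof (rule dprod_rdeg, intro ballI conjI)
    fix G assume G: "G \<in> set Gs"
    show "finite (fst G)" using finG G by blast
    obtain k where k: "regular G k" using assms(3) G by blast
    have "\<forall>x\<in>fst G. (\<Sum>y\<in>fst G. adj G x y) = real k"
    proof
      fix x assume "x \<in> fst G"
      then have "Defs.degree G x = k" using k by (simp add: regular_def)
      then show "(\<Sum>y\<in>fst G. adj G x y) = real k" using rdeg[OF \<open>finite (fst G)\<close>, of x] by simp
    qed
    then show "\<exists>K. \<forall>x\<in>fst G. (\<Sum>y\<in>fst G. adj G x y) = K" by blast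
  qed
  then obtain K0 where K0: "\<forall>xs\<in>fst D. (\<Sum>ys\<in>fst D. adj D xs ys) = K0" by blast
  define K where "K = Defs.degree D u"
  have deg: "\<forall>x\<in>fst D. Defs.degree D x = K"
  proof
    fix x assume "x \<in> fst D"
    then have "real (Defs.degree D x) = real (Defs.degree D u)" using rdeg[OF finD] K0 uD by simp
    then show "Defs.degree D x = K" using K_def by simp
  qed
  define \<tau> where "\<tau> = pi / 2^(Suc C)"
  define E where "E = exp (\<i> * of_real \<tau> * of_nat (2*K))"
  let ?W = "fst (blowup2 D)"
  let ?L = "laplacian (blowup2 D)"
  have WD: "?W = {0,1} \<times> fst D" by (simp add: blowup2_def)
  have mem: "(0,u) \<in> ?W" "(1,u) \<in> ?W" using uD WD by auto
  have tau: "\<tau> > 0" by (simp add: \<tau>_def)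
  have main: "\<forall>v\<in>?W. lap_U (blowup2 D) \<tau> v (0,u) = - E * (if v = (1,u) then 1 else 0)"
  proof
    fix v assume "v \<in> ?W"
    then obtain l x where v: "v = (l,x)" "l \<in> {0,1}" "x \<in> fst D" using WD by auto
    have eqm: "mat_pow ?W ?L n (l,x) (0,u) = Lpow ?W ?L n (\<lambda>(m,y). if m = 0 then f y else 0) (l,x)" for n
    proof -
      have "Lpow ?W ?L n (\<lambda>(m,y). if m = 0 then f y else 0) (l,x) =
          Lpow ?W ?L n (\<lambda>w. if w = (0,u) then 1 else 0) (l,x)"
        by (rule Lpow_cong) (use f(2) WD in auto)
      also have "\<dots> = (\<Sum>w\<in>?W. if w = (0,u) then mat_pow ?W ?L n (l,x) w else 0)"
        unfolding Lpow_def by (intro sum.cong) auto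
      also have "\<dots> = mat_pow ?W ?L n (l,x) (0,u)" using mem finD WD by simp
      finally show ?thesis by simp
    qed
    have "(\<lambda>n. (\<i> * of_real \<tau>)^n / of_nat (fact n) * mat_pow ?W ?L n (l,x) (0,u)) sums
         (- E * (if l = 1 then f x else 0))"
      using series_F[OF finD deg f(1) v(2,3)] unfolding eqm \<tau>_def E_def .
    then have "lap_U (blowup2 D) \<tau> (l,x) (0,u) = - E * (if l = 1 then f x else 0)"
      unfolding lap_U_def by (simp add: sums_iff)
    then show "lap_U (blowup2 D) \<tau> v (0,u) = - E * (if v = (1,u) then 1 else 0)"
      using v f(2) by auto
  qed
  have ex: "\<exists>\<gamma>. \<forall>v\<in>?W. lap_U (blowup2 D) \<tau> v (0,u) = \<gamma> * (if v = (1,u) then 1 else 0)"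
    by (rule exI[of _ "- E"]) (rule main)
  have ex2: "\<exists>\<tau>>0. \<exists>\<gamma>. \<forall>v\<in>?W. lap_U (blowup2 D) \<tau> v (0,u) = \<gamma> * (if v = (1,u) then 1 else 0)"
    using tau ex by blast
  have "lap_pst (blowup2 D) (0,u) (1,u)"
    unfolding lap_pst_def by (intro conjI mem ex2)
  then show ?thesis unfolding D_def .
qed

end
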